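(* Let $b_1,\dots,b_n\in\textsc{Xos}$ be valuations over $m$ items. Then for any partition $\mathbf{x}_1,\dots,\mathbf{x}_n\in\{0,1\}^m$ of the items (i.e. $\sum_i\mathbf{x}_i=\mathbf{1}$), $$\sum_i W^{\mathbf{b}_{-i}}(\mathbf{x}_i\mid\mathbf{1}-\mathbf{x}_i)\le 2\,W^{\mathbf{b}}(\mathbf{1}).$$
   Context: A valuation is $v:\{0,1\}^m\to\mathbb{R}_+$ with $v(\mathbf{0})=0$ and monotone; it is extended to $\mathbb{Z}^m_+$ by $v(\mathbf{x})=v(\min(\mathbf{x},\mathbf{1}))$. $v\in\textsc{Xos}$ if there is a set $I$ and vectors $\{\mathbf{w}_k\}_{k\in I}\subseteq\mathbb{R}^m_+$ with $v(\mathbf{x})=\max_{k\in I}\mathbf{w}_k\cdot\mathbf{x}$. For $\mathbf{x}\in\mathbb{Z}^m_+$: $W^{\mathbf{b}}(\mathbf{x})=\max\{\sum_k b_k(\mathbf{y}_k):\sum_k\mathbf{y}_k\le\mathbf{x},\mathbf{y}_k\in\{0,1\}^m\}$ and $W^{\mathbf{b}_{-i}}(\mathbf{x})=\max\{\sum_{k\ne i}b_k(\mathbf{y}_k):\sum_{k\ne i}\mathbf{y}_k\le\mathbf{x},\mathbf{y}_k\in\{0,1\}^m\}$. For a function $f$ on $\mathbb{Z}^m_+$, $f(\mathbf{y}\mid\mathbf{x})=f(\mathbf{y}+\mathbf{x})-f(\mathbf{x})$. *)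

theory Defs
  imports Complex_Main
begin

text \<open>Items are 0,...,m-1. A vector in Z^m_+ is a function nat => nat
  (only coordinates j < m matter); a vector in {0,1}^m is such a function
  with values at most 1 that vanishes outside the item range.\<close>

definition binvec :: "nat \<Rightarrow> (nat \<Rightarrow> nat) \<Rightarrow> bool" where
  "binvec m y \<longleftrightarrow> (\<forall>j. y j \<le> 1) \<and> (\<forall>j\<ge>m. y j = 0)"

definition onevec :: "nat \<Rightarrow> nat \<Rightarrow> nat" where
  "onevec m = (\<lambda>j. if j < m then 1 else 0)"

definition zerovec :: "nat \<Rightarrow> nat" where
  "zerovec = (\<lambda>j. 0)"

definition valuation :: "nat \<Rightarrow> ((nat \<Rightarrow> nat) \<Rightarrow> real) \<Rightarrow> bool" where
  "valuation m v \<longleftrightarrow> v zerovec = 0 \<and> (\<forall>x. binvec m x \<longrightarrow> v x \<ge> 0)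
     \<and> (\<forall>x y. binvec m x \<longrightarrow> binvec m y \<longrightarrow> (\<forall>j. x j \<le> y j) \<longrightarrow> v x \<le> v y)"

definition dotp :: "nat \<Rightarrow> (nat \<Rightarrow> real) \<Rightarrow> (nat \<Rightarrow> nat) \<Rightarrow> real" where
  "dotp m w x = (\<Sum>j<m. w j * real (x j))"

definition xos :: "nat \<Rightarrow> ((nat \<Rightarrow> nat) \<Rightarrow> real) \<Rightarrow> bool" where
  "xos m v \<longleftrightarrow> valuation m v \<and>
     (\<exists>WS :: (nat \<Rightarrow> real) set. (\<forall>w\<in>WS. \<forall>j. w j \<ge> 0) \<and>
        (\<forall>x. binvec m x \<longrightarrow> (\<exists>w\<in>WS. v x = dotp m w x) \<and> (\<forall>w\<in>WS. dotp m w x \<le> v x)))"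

definition Wel :: "nat \<Rightarrow> nat \<Rightarrow> (nat \<Rightarrow> (nat \<Rightarrow> nat) \<Rightarrow> real) \<Rightarrow> (nat \<Rightarrow> nat) \<Rightarrow> real" where
  "Wel m n b x = Max {(\<Sum>k<n. b k (y k)) | y.
       (\<forall>k<n. binvec m (y k)) \<and> (\<forall>j<m. (\<Sum>k<n. y k j) \<le> x j)}"

definition Wel_minus :: "nat \<Rightarrow> nat \<Rightarrow> (nat \<Rightarrow> (nat \<Rightarrow> nat) \<Rightarrow> real) \<Rightarrow> nat \<Rightarrow> (nat \<Rightarrow> nat) \<Rightarrow> real" where
  "Wel_minus m n b i x = Max {(\<Sum>k\<in>{..<n} - {i}. b k (y k)) | y.
       (\<forall>k\<in>{..<n} - {i}. binvec m (y k)) \<and> (\<forall>j<m. (\<Sum>k\<in>{..<n} - {i}. y k j) \<le> x j)}"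

definition marg :: "((nat \<Rightarrow> nat) \<Rightarrow> real) \<Rightarrow> (nat \<Rightarrow> nat) \<Rightarrow> (nat \<Rightarrow> nat) \<Rightarrow> real" where
  "marg f y x = f (\<lambda>j. y j + x j) - f x"

end

theory Submission
  imports Defs "HOL-Library.FuncSet"
begin

lemma finite_binvec: "finite {v. binvec m v}"
proof (rule finite_subset)
  show "{v. binvec m v} \<subseteq> (\<lambda>S j. if j\<in>S then 1 else 0) ` Pow {..<m}"
  proof
    fix v assume "v \<in> {v. binvec m v}"
    then have b: "binvec m v" by simp
    have "v = (\<lambda>j. if j\<in>{j. v j = 1} then 1 else 0)"
    proof
      fix j have "v j \<le> 1" using b unfolding binvec_def by blast
      then show "v j = (if j\<in>{j. v j = 1} then 1 else 0)" by auto
    qed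
    moreover have "{j. v j = 1} \<in> Pow {..<m}"
    proof -
      have "\<forall>j\<ge>m. v j = 0" using b unfolding binvec_def by blast
      then have "\<And>j. v j = 1 \<Longrightarrow> j < m" by (metis not_le zero_neq_one)
      then show ?thesis by auto
    qed
    ultimately show "v \<in> (\<lambda>S j. if j\<in>S then 1 else 0) ` Pow {..<m}" by blast
  qed
qed simp

lemma finite_alloc:
  assumes "finite K"
  shows "finite {(\<Sum>k\<in>K. g k (y k)) | y. (\<forall>k\<in>K. binvec m (y k)) \<and> P y}"
proof (rule finite_subset)
  show "{(\<Sum>k\<in>K. g k (y k)) | y. (\<forall>k\<in>K. binvec m (y k)) \<and> P y}
        \<subseteq> (\<lambda>f. \<Sum>k\<in>K. g k (f k)) ` PiE K (\<lambda>_. {v. binvec m v})"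
  proof
    fix s assume "s \<in> {(\<Sum>k\<in>K. g k (y k)) | y. (\<forall>k\<in>K. binvec m (y k)) \<and> P y}"
    then obtain y where s: "s = (\<Sum>k\<in>K. g k (y k))" and y: "\<forall>k\<in>K. binvec m (y k)" by blast
    have "restrict y K \<in> PiE K (\<lambda>_. {v. binvec m v})" using y by (auto simp: PiE_iff)
    moreover have "s = (\<Sum>k\<in>K. g k (restrict y K k))" using s by simp
    ultimately show "s \<in> (\<lambda>f. \<Sum>k\<in>K. g k (f k)) ` PiE K (\<lambda>_. {v. binvec m v})" by blast
  qed
  show "finite ((\<lambda>f. \<Sum>k\<in>K. g k (f k)) ` PiE K (\<lambda>_. {v. binvec m v}))"
    using assms finite_binvec by (intro finite_imageI finite_PiE) auto
qed

lemma binvec_zero: "binvec m zerovec" by (simp add: binvec_def zerovec_def)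

lemma Wel_ge:
  assumes "\<forall>k<n. binvec m (y k)" "\<forall>j<m. (\<Sum>k<n. y k j) \<le> x j"
  shows "(\<Sum>k<n. b k (y k)) \<le> Wel m n b x"
  unfolding Wel_def
  apply (rule Max_ge)
  apply (rule finite_subset[OF _ finite_alloc[of "{..<n}" b m "\<lambda>y. \<forall>j<m. (\<Sum>k<n. y k j) \<le> x j"]]) apply auto[1] apply simp
  using assms by blast

lemma Wel_attained:
  "\<exists>y. (\<forall>k<n. binvec m (y k)) \<and> (\<forall>j<m. (\<Sum>k<n. y k j) \<le> x j)
       \<and> Wel m n b x = (\<Sum>k<n. b k (y k))"
proof -
  let ?S = "{(\<Sum>k<n. b k (y k)) | y. (\<forall>k<n. binvec m (y k)) \<and> (\<forall>j<m. (\<Sum>k<n. y k j) \<le> x j)}"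
  have f: "finite ?S"
    by (rule finite_subset[OF _ finite_alloc[of "{..<n}" b m "\<lambda>y. \<forall>j<m. (\<Sum>k<n. y k j) \<le> x j"]]) auto
  have "(\<Sum>k<n. b k ((\<lambda>_. zerovec) k)) \<in> ?S"
    using binvec_zero by (auto simp: zerovec_def)
  then have "?S \<noteq> {}" by blast
  from Max_in[OF f this] show ?thesis unfolding Wel_def by auto
qed

lemma Welm_ge:
  assumes "\<forall>k\<in>{..<n}-{i}. binvec m (y k)" "\<forall>j<m. (\<Sum>k\<in>{..<n}-{i}. y k j) \<le> x j"
  shows "(\<Sum>k\<in>{..<n}-{i}. b k (y k)) \<le> Wel_minus m n b i x"
  unfolding Wel_minus_def
  apply (rule Max_ge)
  using finite_alloc[of "{..<n}-{i}" b m "\<lambda>y. \<forall>j<m. (\<Sum>k\<in>{..<n}-{i}. y k j) \<le> x j"] apply simp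
  using assms by blast

lemma Welm_attained:
  "\<exists>y. (\<forall>k\<in>{..<n}-{i}. binvec m (y k)) \<and> (\<forall>j<m. (\<Sum>k\<in>{..<n}-{i}. y k j) \<le> x j)
       \<and> Wel_minus m n b i x = (\<Sum>k\<in>{..<n}-{i}. b k (y k))"
proof -
  let ?S = "{(\<Sum>k\<in>{..<n}-{i}. b k (y k)) | y. (\<forall>k\<in>{..<n}-{i}. binvec m (y k)) \<and> (\<forall>j<m. (\<Sum>k\<in>{..<n}-{i}. y k j) \<le> x j)}"
  have f: "finite ?S"
    using finite_alloc[of "{..<n}-{i}" b m "\<lambda>y. \<forall>j<m. (\<Sum>k\<in>{..<n}-{i}. y k j) \<le> x j"] by simp
  have "(\<Sum>k\<in>{..<n}-{i}. b k ((\<lambda>_. zerovec) k)) \<in> ?S"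
    using binvec_zero by (auto simp: zerovec_def)
  then have "?S \<noteq> {}" by blast
  from Max_in[OF f this] show ?thesis unfolding Wel_minus_def by auto
qed

lemma dotp_add: "dotp m w (\<lambda>j. u j + v j) = dotp m w u + dotp m w v"
  by (simp add: dotp_def sum.distrib distrib_left)

lemma dotp_nonneg: "\<forall>j. w j \<ge> 0 \<Longrightarrow> dotp m w u \<ge> 0"
  by (simp add: dotp_def sum_nonneg)

theorem lemma3:
  fixes m n :: nat
    and b :: "nat \<Rightarrow> (nat \<Rightarrow> nat) \<Rightarrow> real"
    and x :: "nat \<Rightarrow> nat \<Rightarrow> nat"
  assumes "\<forall>k<n. xos m (b k)"
    and "\<forall>i<n. binvec m (x i)"
    and "\<forall>j<m. (\<Sum>i<n. x i j) = 1"
  shows "(\<Sum>i<n. marg (Wel_minus m n b i) (x i) (\<lambda>j. onevec m j - x i j))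
           \<le> 2 * Wel m n b (onevec m)"
proof -
  define W where "W = Wel m n b (onevec m)"
  obtain ys where ysb: "\<forall>k<n. binvec m (ys k)"
    and ysf: "\<forall>j<m. (\<Sum>k<n. ys k j) \<le> onevec m j"
    and Wys: "W = (\<Sum>k<n. b k (ys k))"
    using Wel_attained[of n m "onevec m" b] unfolding W_def by blast
  define Q where "Q k wk \<longleftrightarrow> (k < n \<longrightarrow> (\<forall>j. wk j \<ge> 0) \<and> b k (ys k) = dotp m wk (ys k)
            \<and> (\<forall>v. binvec m v \<longrightarrow> dotp m wk v \<le> b k v))" for k and wk :: "nat \<Rightarrow> real"
  have "\<forall>k. \<exists>wk. Q k wk"
  proof
    fix k show "\<exists>wk. Q k wk"
    proof (cases "k < n")
      case False then show ?thesis unfolding Q_def by blast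
    next
      case k: True
      have "xos m (b k)" using assms(1) k by blast
      then have "\<exists>WS :: (nat \<Rightarrow> real) set. (\<forall>w\<in>WS. \<forall>j. w j \<ge> 0) \<and>
        (\<forall>v. binvec m v \<longrightarrow> (\<exists>w\<in>WS. b k v = dotp m w v) \<and> (\<forall>w\<in>WS. dotp m w v \<le> b k v))"
        unfolding xos_def by (rule conjunct2)
      then obtain WS :: "(nat \<Rightarrow> real) set" where WS: "\<forall>w\<in>WS. \<forall>j. w j \<ge> 0"
        "\<forall>v. binvec m v \<longrightarrow> (\<exists>w\<in>WS. b k v = dotp m w v) \<and> (\<forall>w\<in>WS. dotp m w v \<le> b k v)"
        by (elim exE conjE)
      have "binvec m (ys k)" using ysb k by blast
      then obtain wk where "wk \<in> WS" "b k (ys k) = dotp m wk (ys k)" using WS(2) by blast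
      then have "Q k wk" unfolding Q_def using WS by blast
      then show ?thesis by blast
    qed
  qed
  then obtain w where "\<forall>k. Q k (w k)" by (rule choice[THEN exE])
  then have w: "\<forall>k<n. (\<forall>j. w k j \<ge> 0) \<and> b k (ys k) = dotp m (w k) (ys k)
            \<and> (\<forall>v. binvec m v \<longrightarrow> dotp m (w k) v \<le> b k v)" unfolding Q_def by blast
  have bnn: "\<forall>k<n. b k zerovec = 0"
  proof (intro allI impI)
    fix k assume "k < n"
    then have "xos m (b k)" using assms(1) by blast
    then have "valuation m (b k)" unfolding xos_def by (rule conjunct1)
    then show "b k zerovec = 0" unfolding valuation_def by (rule conjunct1)
  qed
  have step: "marg (Wel_minus m n b i) (x i) (\<lambda>j. onevec m j - x i j)
      \<le> b i (ys i) + (\<Sum>k<n. dotp m (w k) (\<lambda>j. x i j * ys k j))" if i: "i < n" for i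
  proof -
    have xb: "binvec m (x i)" using assms(2) i by blast
    have A: "(\<lambda>j. x i j + (onevec m j - x i j)) = onevec m"
    proof
      fix j show "x i j + (onevec m j - x i j) = onevec m j"
        using xb unfolding binvec_def onevec_def by (cases "j < m") auto
    qed
    have B: "Wel_minus m n b i (onevec m) \<le> W"
    proof -
      obtain y where yb: "\<forall>k\<in>{..<n}-{i}. binvec m (y k)"
        and yf: "\<forall>j<m. (\<Sum>k\<in>{..<n}-{i}. y k j) \<le> onevec m j"
        and yW: "Wel_minus m n b i (onevec m) = (\<Sum>k\<in>{..<n}-{i}. b k (y k))"
        using Welm_attained[of n i m "onevec m" b] by blast
      define y' where "y' = y(i := zerovec)"
      have s1: "(\<Sum>k<n. b k (y' k)) = b i (y' i) + (\<Sum>k\<in>{..<n}-{i}. b k (y' k))"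
        using i by (simp add: sum.remove)
      have s2: "(\<Sum>k\<in>{..<n}-{i}. b k (y' k)) = (\<Sum>k\<in>{..<n}-{i}. b k (y k))"
        by (rule sum.cong) (auto simp: y'_def)
      have "(\<Sum>k<n. b k (y' k)) \<le> W" unfolding W_def
      proof (rule Wel_ge)
        show "\<forall>k<n. binvec m (y' k)" using yb binvec_zero by (auto simp: y'_def)
        show "\<forall>j<m. (\<Sum>k<n. y' k j) \<le> onevec m j"
        proof (intro allI impI)
          fix j assume j: "j < m"
          have "(\<Sum>k<n. y' k j) = y' i j + (\<Sum>k\<in>{..<n}-{i}. y' k j)"
            using i by (simp add: sum.remove)
          also have "\<dots> = (\<Sum>k\<in>{..<n}-{i}. y k j)"
            by (simp add: y'_def zerovec_def)
          finally show "(\<Sum>k<n. y' k j) \<le> onevec m j" using yf j by simp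
        qed
      qed
      then show ?thesis using s1 s2 yW bnn i by (simp add: y'_def)
    qed
    define z where "z k = (\<lambda>j. (1 - x i j) * ys k j)" for k
    have zb: "\<forall>k<n. binvec m (z k)"
    proof (intro allI impI)
      fix k assume "k < n"
      then have "binvec m (ys k)" using ysb by blast
      then have a: "\<forall>j. ys k j \<le> 1" and c: "\<forall>j\<ge>m. ys k j = 0" unfolding binvec_def by auto
      have "(1 - x i j) * ys k j \<le> ys k j" for j by (cases "x i j") auto
      then have "\<forall>j. z k j \<le> 1" using a unfolding z_def by (meson le_trans)
      moreover have "\<forall>j\<ge>m. z k j = 0" using c unfolding z_def by simp
      ultimately show "binvec m (z k)" unfolding binvec_def by blast
    qed
    have C: "(\<Sum>k\<in>{..<n}-{i}. b k (z k)) \<le> Wel_minus m n b i (\<lambda>j. onevec m j - x i j)"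
    proof (rule Welm_ge)
      show "\<forall>k\<in>{..<n}-{i}. binvec m (z k)" using zb by auto
      show "\<forall>j<m. (\<Sum>k\<in>{..<n}-{i}. z k j) \<le> onevec m j - x i j"
      proof (intro allI impI)
        fix j assume j: "j < m"
        have "(\<Sum>k\<in>{..<n}-{i}. z k j) = (1 - x i j) * (\<Sum>k\<in>{..<n}-{i}. ys k j)"
          by (simp add: z_def sum_distrib_left)
        also have "\<dots> \<le> (1 - x i j) * (\<Sum>k<n. ys k j)"
          by (intro mult_le_mono2 sum_mono2) auto
        also have "\<dots> \<le> (1 - x i j) * 1"
          using ysf j by (intro mult_le_mono2) (simp add: onevec_def)
        finally show "(\<Sum>k\<in>{..<n}-{i}. z k j) \<le> onevec m j - x i j"
          using j by (simp add: onevec_def)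
      qed
    qed
    have D: "b k (z k) \<ge> b k (ys k) - dotp m (w k) (\<lambda>j. x i j * ys k j)" if k: "k < n" for k
    proof -
      have "ys k = (\<lambda>j. z k j + x i j * ys k j)"
      proof
        fix j have "x i j \<le> 1" using xb unfolding binvec_def by blast
        then show "ys k j = z k j + x i j * ys k j" unfolding z_def
          by (cases "x i j") auto
      qed
      then have "dotp m (w k) (ys k) = dotp m (w k) (z k) + dotp m (w k) (\<lambda>j. x i j * ys k j)"
        using dotp_add[of m "w k" "z k" "\<lambda>j. x i j * ys k j"] by simp
      moreover have "dotp m (w k) (z k) \<le> b k (z k)" using w zb k by blast
      moreover have "b k (ys k) = dotp m (w k) (ys k)" using w k by blast
      ultimately show ?thesis by linarith
    qed
    have nn: "\<forall>k<n. dotp m (w k) (\<lambda>j. x i j * ys k j) \<ge> 0" using w dotp_nonneg by blast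
    have "(\<Sum>k\<in>{..<n}-{i}. b k (ys k) - dotp m (w k) (\<lambda>j. x i j * ys k j))
          \<le> (\<Sum>k\<in>{..<n}-{i}. b k (z k))"
      by (rule sum_mono) (use D in auto)
    moreover have "(\<Sum>k\<in>{..<n}-{i}. b k (ys k) - dotp m (w k) (\<lambda>j. x i j * ys k j))
        = (\<Sum>k\<in>{..<n}-{i}. b k (ys k)) - (\<Sum>k\<in>{..<n}-{i}. dotp m (w k) (\<lambda>j. x i j * ys k j))"
      by (simp add: sum_subtractf)
    moreover have "(\<Sum>k\<in>{..<n}-{i}. b k (ys k)) = W - b i (ys i)"
      using i Wys by (simp add: sum.remove)
    moreover have "(\<Sum>k\<in>{..<n}-{i}. dotp m (w k) (\<lambda>j. x i j * ys k j))
        \<le> (\<Sum>k<n. dotp m (w k) (\<lambda>j. x i j * ys k j))"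
      by (rule sum_mono2) (use nn in auto)
    ultimately have "W - b i (ys i) - (\<Sum>k<n. dotp m (w k) (\<lambda>j. x i j * ys k j))
        \<le> Wel_minus m n b i (\<lambda>j. onevec m j - x i j)" using C by linarith
    then show ?thesis using B unfolding marg_def A by linarith
  qed
  have sumx: "(\<Sum>i<n. dotp m (w k) (\<lambda>j. x i j * ys k j)) = dotp m (w k) (ys k)" for k
  proof -
    have "(\<Sum>i<n. dotp m (w k) (\<lambda>j. x i j * ys k j))
        = (\<Sum>i<n. \<Sum>j<m. w k j * real (x i j * ys k j))"
      unfolding dotp_def by (rule refl)
    also have "\<dots> = (\<Sum>j<m. \<Sum>i<n. w k j * real (x i j * ys k j))"
      by (rule sum.swap)
    also have "\<dots> = (\<Sum>j<m. w k j * real (ys k j))"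
    proof (rule sum.cong)
      fix j assume "j \<in> {..<m}"
      then have "(\<Sum>i<n. x i j) = 1" using assms(3) by auto
      then have e: "(\<Sum>i<n. x i j * ys k j) = ys k j"
        by (simp only: sum_distrib_right[symmetric] mult_1)
      have "(\<Sum>i<n. w k j * real (x i j * ys k j)) = w k j * real (\<Sum>i<n. x i j * ys k j)"
        by (simp only: sum_distrib_left of_nat_sum)
      then show "(\<Sum>i<n. w k j * real (x i j * ys k j)) = w k j * real (ys k j)"
        unfolding e .
    qed (rule refl)
    finally show ?thesis unfolding dotp_def .
  qed
  have "(\<Sum>i<n. marg (Wel_minus m n b i) (x i) (\<lambda>j. onevec m j - x i j))
      \<le> (\<Sum>i<n. b i (ys i) + (\<Sum>k<n. dotp m (w k) (\<lambda>j. x i j * ys k j)))"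
    by (rule sum_mono) (use step in auto)
  also have "\<dots> = W + (\<Sum>k<n. \<Sum>i<n. dotp m (w k) (\<lambda>j. x i j * ys k j))"
    using Wys by (simp only: sum.distrib) (subst sum.swap, simp)
  also have "\<dots> = W + (\<Sum>k<n. b k (ys k))"
  proof -
    have "\<forall>k<n. (\<Sum>i<n. dotp m (w k) (\<lambda>j. x i j * ys k j)) = b k (ys k)"
      using sumx w by metis
    then show ?thesis by simp
  qed
  also have "\<dots> = 2 * W" using Wys by simp
  finally show ?thesis unfolding W_def .
qed

end
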